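(* Let $G$ be a finite simple $d$-regular graph on $n\ge 3$ vertices that contains at least one Hamiltonian cycle. Choose edges of $G$ one at a time in a uniformly random order (without repetition), stopping as soon as every vertex has degree at least two; call the resulting random graph $G_\omega$. Then $$\mathbb{E}\left(\frac{\#\{\text{Hamiltonian cycles of } G \text{ contained in } G_\omega\}}{\#\{\text{Hamiltonian cycles of } G\}}\right) = \frac{2}{\binom{n+d-2}{n}} - \frac{1}{\binom{n+2d-4}{n}}.$$
   Context: Precisely: a uniformly random ordering $(e_1,\dots,e_m)$ of the $m$ edges of $G$ is chosen, $k$ is the least index such that the graph on $V(G)$ with edges $e_1,\dots,e_k$ has minimum degree at least $2$, and $G_\omega$ is that graph. Hamiltonian cycles are counted as subgraphs (edge sets). *)

theory Defs
  imports "HOL-Probability.Probability" "HOL-Combinatorics.Multiset_Permutations"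
begin

definition simple_graph :: "'a set \<Rightarrow> 'a set set \<Rightarrow> bool" where
  "simple_graph V E \<longleftrightarrow> finite V \<and> (\<forall>e\<in>E. \<exists>u v. u \<noteq> v \<and> u \<in> V \<and> v \<in> V \<and> e = {u, v})"

definition degree :: "'a set set \<Rightarrow> 'a \<Rightarrow> nat" where
  "degree E v = card {e \<in> E. v \<in> e}"

definition regular :: "'a set \<Rightarrow> 'a set set \<Rightarrow> nat \<Rightarrow> bool" where
  "regular V E d \<longleftrightarrow> (\<forall>v\<in>V. degree E v = d)"

definition ham_cycles :: "'a set \<Rightarrow> 'a set set \<Rightarrow> 'a set set set" where
  "ham_cycles V E = {H. H \<subseteq> E \<and> (\<exists>vs. distinct vs \<and> set vs = V \<and> length vs \<ge> 3 \<and>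
      H = {{vs ! i, vs ! ((i + 1) mod length vs)} | i. i < length vs})}"

definition stop_index :: "'a set \<Rightarrow> 'a set list \<Rightarrow> nat" where
  "stop_index V xs = (LEAST k. \<forall>v\<in>V. degree (set (take k xs)) v \<ge> 2)"

definition G_omega :: "'a set \<Rightarrow> 'a set list \<Rightarrow> 'a set set" where
  "G_omega V xs = set (take (stop_index V xs) xs)"

end

theory Submission
  imports Defs
begin


definition pre :: "'b \<Rightarrow> 'b list \<Rightarrow> 'b list" where
  "pre e xs = takeWhile (\<lambda>x. x \<noteq> e) xs"

lemma filter_pre: "P e \<Longrightarrow> pre e (filter P xs) = filter P (pre e xs)"
  by (induction xs) (auto simp: pre_def)

lemma pre_split: "e \<notin> set a \<Longrightarrow> pre e (a @ e # b) = a"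
  by (induction a) (auto simp: pre_def)

lemma pre_notin: "e \<notin> set (pre e xs)"
  unfolding pre_def using set_takeWhileD by fastforce

lemma pre_subset: "set (pre e xs) \<subseteq> set xs"
  unfolding pre_def by (meson set_takeWhileD subsetI)

lemma filter_random_perm:
  assumes "finite A"
  shows "map_pmf (filter P) (pmf_of_set (permutations_of_set A)) =
         pmf_of_set (permutations_of_set {x\<in>A. P x})"
proof -
  have "filter P = fst \<circ> partition P" by (auto simp: fun_eq_iff)
  hence "map_pmf (filter P) (pmf_of_set (permutations_of_set A)) =
     map_pmf fst (map_pmf (partition P) (pmf_of_set (permutations_of_set A)))"
    by (simp add: pmf.map_comp)
  also have "\<dots> = pmf_of_set (permutations_of_set {x\<in>A. P x})"
    by (simp add: partition_random_permutations[OF assms] map_fst_pair_pmf)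
  finally show ?thesis .
qed

lemma count_S:
  assumes "finite T" "finite R" "T \<inter> R = {}" "e \<in> T"
  shows "card {ys \<in> permutations_of_set (T \<union> R).
           T - {e} \<subseteq> set (pre e ys) \<and> R \<inter> set (pre e ys) = {}}
         = fact (card T - 1) * fact (card R)"
proof -
  let ?f = "\<lambda>(a, b). a @ e # b"
  have eq: "{ys \<in> permutations_of_set (T \<union> R).
           T - {e} \<subseteq> set (pre e ys) \<and> R \<inter> set (pre e ys) = {}}
        = ?f ` (permutations_of_set (T - {e}) \<times> permutations_of_set R)"
  proof (rule set_eqI, rule iffI)
    fix ys assume "ys \<in> {ys \<in> permutations_of_set (T \<union> R).
           T - {e} \<subseteq> set (pre e ys) \<and> R \<inter> set (pre e ys) = {}}"
    hence ys: "set ys = T \<union> R" "distinct ys" "T - {e} \<subseteq> set (pre e ys)" "R \<inter> set (pre e ys) = {}"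
      by (auto simp: permutations_of_set_def)
    have "e \<in> set ys" using ys assms by auto
    then obtain a b where ab: "ys = a @ e # b" by (meson split_list)
    have ea: "e \<notin> set a" "e \<notin> set b" "set a \<inter> set b = {}" using ys(2) ab by auto
    have pa: "pre e ys = a" using ab ea pre_split by metis
    have sa: "set a = T - {e}" using ys pa ab assms by auto
    have sb: "set b = R" using ys pa ab assms ea sa by auto
    show "ys \<in> ?f ` (permutations_of_set (T - {e}) \<times> permutations_of_set R)"
      using ab sa sb ys(2) by (intro image_eqI[of _ _ "(a, b)"]) (auto simp: permutations_of_set_def)
  next
    fix ys assume "ys \<in> ?f ` (permutations_of_set (T - {e}) \<times> permutations_of_set R)"
    then obtain a b where ab: "ys = a @ e # b" "set a = T - {e}" "distinct a" "set b = R" "distinct b"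
      by (auto simp: permutations_of_set_def)
    have pa: "pre e ys = a" using ab pre_split by fastforce
    show "ys \<in> {ys \<in> permutations_of_set (T \<union> R).
           T - {e} \<subseteq> set (pre e ys) \<and> R \<inter> set (pre e ys) = {}}"
      using ab pa assms by (auto simp: permutations_of_set_def)
  qed
  have inj: "inj_on ?f (permutations_of_set (T - {e}) \<times> permutations_of_set R)"
  proof (rule inj_onI)
    fix p q assume p: "p \<in> permutations_of_set (T - {e}) \<times> permutations_of_set R"
      and q: "q \<in> permutations_of_set (T - {e}) \<times> permutations_of_set R"
      and h0: "?f p = ?f q"
    obtain a b where pab: "p = (a, b)" by fastforce
    obtain a' b' where qab: "q = (a', b')" by fastforce
    have h: "a @ e # b = a' @ e # b'" using h0 pab qab by simp
    have "length a = length a'" using p q pab qab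
      by (metis length_finite_permutations_of_set mem_Sigma_iff)
    thus "p = q" using h pab qab by auto
  qed
  have "card {ys \<in> permutations_of_set (T \<union> R).
           T - {e} \<subseteq> set (pre e ys) \<and> R \<inter> set (pre e ys) = {}}
     = card (permutations_of_set (T - {e})) * card (permutations_of_set R)"
    unfolding eq by (simp add: card_image[OF inj] card_cartesian_product)
  also have "\<dots> = fact (card T - 1) * fact (card R)"
    using assms by (simp add: card_Diff_singleton)
  finally show ?thesis .
qed

lemma prob_event:
  assumes "finite A" "T \<subseteq> A" "R \<subseteq> A" "T \<inter> R = {}" "e \<in> T"
  shows "real (card {xs \<in> permutations_of_set A.
           T - {e} \<subseteq> set (pre e xs) \<and> R \<inter> set (pre e xs) = {}}) / fact (card A)
       = fact (card T - 1) * fact (card R) / fact (card T + card R)"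
proof -
  have fT: "finite T" "finite R" using assms by (meson finite_subset)+
  define S where "S = T \<union> R"
  define \<Phi> where "\<Phi> = (\<lambda>xs. T - {e} \<subseteq> set (pre e xs) \<and> R \<inter> set (pre e xs) = {})"
  have key: "\<Phi> (filter (\<lambda>x. x \<in> S) xs) = \<Phi> xs" for xs
  proof -
    have "set (pre e (filter (\<lambda>x. x \<in> S) xs)) = set (pre e xs) \<inter> S"
      using assms S_def by (subst filter_pre) auto
    moreover have "T - {e} \<subseteq> S" "R \<subseteq> S" using S_def by auto
    ultimately show ?thesis unfolding \<Phi>_def by blast
  qed
  have SA: "{x\<in>A. x \<in> S} = S" using assms S_def by auto
  have "real (card {xs \<in> permutations_of_set A. \<Phi> xs}) / fact (card A)
     = measure (pmf_of_set (permutations_of_set A)) {xs. \<Phi> xs}"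
    using assms by (simp add: measure_pmf_of_set Int_def)
  also have "{xs. \<Phi> xs} = filter (\<lambda>x. x \<in> S) -` {ys. \<Phi> ys}" using key by auto
  also have "measure (pmf_of_set (permutations_of_set A)) \<dots> =
     measure (map_pmf (filter (\<lambda>x. x \<in> S)) (pmf_of_set (permutations_of_set A))) {ys. \<Phi> ys}"
    by simp
  also have "\<dots> = measure (pmf_of_set (permutations_of_set S)) {ys. \<Phi> ys}"
    by (simp add: filter_random_perm[OF assms(1)] SA)
  also have "\<dots> = real (card {ys \<in> permutations_of_set S. \<Phi> ys}) / fact (card S)"
    using fT S_def by (simp add: measure_pmf_of_set Int_def)
  also have "card {ys \<in> permutations_of_set S. \<Phi> ys} = fact (card T - 1) * fact (card R)"
    unfolding S_def \<Phi>_def by (rule count_S[OF fT assms(4,5)])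
  also have "card S = card T + card R" using fT assms S_def card_Un_disjoint by blast
  finally show ?thesis by (simp add: \<Phi>_def)
qed



lemma modsuc: "(i::nat) < n \<Longrightarrow> (i + 1) mod n = (if i + 1 = n then 0 else i + 1)"
  by auto

lemma ham_facts:
  assumes "H \<in> ham_cycles V E"
  shows "H \<subseteq> E" "card H = card V" "\<And>w. w \<in> V \<Longrightarrow> card {f\<in>H. w \<in> f} = 2"
proof -
  obtain vs where vs: "H \<subseteq> E" "distinct vs" "set vs = V" "length vs \<ge> 3"
    "H = {{vs ! i, vs ! ((i + 1) mod length vs)} | i. i < length vs}"
    using assms unfolding ham_cycles_def by blast
  define n where "n = length vs"
  define ed where "ed = (\<lambda>i. {vs ! i, vs ! ((i + 1) mod n)})"
  have Hed: "H = ed ` {..<n}" using vs(5) unfolding ed_def n_def by auto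
  have cV: "card V = n" using vs distinct_card n_def by metis
  have n3: "n \<ge> 3" using vs n_def by simp
  have nth_inj: "\<And>i j. i < n \<Longrightarrow> j < n \<Longrightarrow> vs ! i = vs ! j \<longleftrightarrow> i = j"
    using vs(2) n_def nth_eq_iff_index_eq by metis
  have inj: "inj_on ed {..<n}"
  proof (rule inj_onI)
    fix i j assume i: "i \<in> {..<n}" and j: "j \<in> {..<n}" and h: "ed i = ed j"
    have si: "(i + 1) mod n < n" and sj: "(j + 1) mod n < n" using n3 by auto
    have "vs ! i \<in> ed j" using h ed_def by auto
    hence a: "i = j \<or> i = (j + 1) mod n" using nth_inj i j sj ed_def by auto
    have "vs ! ((i + 1) mod n) \<in> ed j" using h ed_def by auto
    hence b: "(i + 1) mod n = j \<or> (i + 1) mod n = (j + 1) mod n" using nth_inj si j sj ed_def by auto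
    show "i = j" using a b i j n3 modsuc[of i n] modsuc[of j n] by (auto split: if_splits)
  qed
  show "H \<subseteq> E" by (rule vs(1))
  show "card H = card V" using Hed card_image[OF inj] cV by simp
  fix w assume "w \<in> V"
  then obtain i where i: "i < n" "w = vs ! i" using vs(3) n_def by (metis in_set_conv_nth)
  define p where "p = (if i = 0 then n - 1 else i - 1)"
  have p: "p < n" "(p + 1) mod n = i" "p \<noteq> i" using i n3 p_def modsuc[of p n] by auto
  have "{f\<in>H. w \<in> f} = {ed i, ed p}"
  proof (rule set_eqI, rule iffI)
    fix f assume "f \<in> {f\<in>H. w \<in> f}"
    then obtain k where k: "k < n" "f = ed k" "w \<in> ed k" using Hed by auto
    have sk: "(k + 1) mod n < n" using n3 by auto
    have "k = i \<or> (k + 1) mod n = i" using k i nth_inj sk ed_def by auto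
    moreover have "(k + 1) mod n = i \<Longrightarrow> k = p"
      using k p i n3 modsuc[of k n] modsuc[of p n] by (auto split: if_splits)
    ultimately show "f \<in> {ed i, ed p}" using k by auto
  next
    fix f assume "f \<in> {ed i, ed p}"
    thus "f \<in> {f\<in>H. w \<in> f}" using Hed i p ed_def by auto
  qed
  moreover have "ed i \<noteq> ed p" using inj i p inj_on_def by (metis lessThan_iff)
  ultimately show "card {f\<in>H. w \<in> f} = 2" by simp
qed



lemma sg_finite: "simple_graph V E \<Longrightarrow> finite E"
proof -
  assume sg: "simple_graph V E"
  have "E \<subseteq> Pow V"
  proof
    fix f assume "f \<in> E"
    then obtain u v where "u \<in> V" "v \<in> V" "f = {u, v}" using sg unfolding simple_graph_def by meson
    thus "f \<in> Pow V" by simp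
  qed
  moreover have "finite V" using sg unfolding simple_graph_def by simp
  ultimately show "finite E" using finite_Pow_iff finite_subset by metis
qed

lemma sg_edge: "simple_graph V E \<Longrightarrow> f \<in> E \<Longrightarrow> \<exists>u v. u \<noteq> v \<and> u \<in> V \<and> v \<in> V \<and> f = {u, v}"
  unfolding simple_graph_def by simp

lemma deg_mono: "finite B \<Longrightarrow> A \<subseteq> B \<Longrightarrow> degree A w \<le> degree B w"
  unfolding degree_def by (rule card_mono) auto

lemma exists_last:
  assumes "distinct xs" "H \<subseteq> set xs" "H \<noteq> {}"
  shows "\<exists>e\<in>H. H - {e} \<subseteq> set (pre e xs)"
proof -
  define fs where "fs = filter (\<lambda>x. x \<in> H) xs"
  have sfs: "set fs = H" using assms fs_def by auto
  hence ne: "fs \<noteq> []" using assms by auto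
  define e where "e = last fs"
  have fsd: "fs = butlast fs @ [e]" using ne e_def by simp
  have dfs: "distinct fs" using assms fs_def by simp
  have "distinct (butlast fs @ [e])" using dfs fsd by metis
  hence eb: "e \<notin> set (butlast fs)" by simp
  have eH: "e \<in> H" using sfs ne e_def by auto
  have "pre e fs = butlast fs" using pre_split[OF eb, of "[]"] fsd by metis
  moreover have "pre e fs = filter (\<lambda>x. x \<in> H) (pre e xs)" using filter_pre[of "\<lambda>x. x \<in> H" e xs] eH fs_def by simp
  moreover have "set (butlast fs) = H - {e}"
  proof -
    have "set (butlast fs @ [e]) = set (butlast fs) \<union> {e}" by simp
    hence "H = set (butlast fs) \<union> {e}" using sfs fsd by metis
    thus ?thesis using eb by blast
  qed
  ultimately have "H - {e} \<subseteq> set (pre e xs)" by (metis filter_is_subset)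
  thus ?thesis using eH by blast
qed

lemma unique_last:
  assumes "distinct xs" "e \<in> set xs" "e' \<in> H" "e \<in> H"
    "H - {e} \<subseteq> set (pre e xs)" "H - {e'} \<subseteq> set (pre e' xs)"
  shows "e = e'"
proof (rule ccontr)
  assume ne: "e \<noteq> e'"
  obtain a b where ab: "xs = a @ e # b" using assms(2) by (meson split_list)
  have ea: "e \<notin> set a" using assms(1) ab by simp
  have pa: "pre e xs = a" using ab ea pre_split by metis
  have "e' \<in> set a" using assms ne pa by auto
  then obtain a1 a2 where a12: "a = a1 @ e' # a2" by (meson split_list)
  have "e' \<notin> set a1" using assms(1) ab a12 by simp
  hence "pre e' xs = a1" using ab a12 pre_split[of e' a1 "a2 @ e # b"] by simp
  hence "e \<in> set a1" using assms ne by auto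
  thus False using ea a12 by simp
qed

lemma notQ_iff:
  assumes sg: "simple_graph V E" and HE: "H \<subseteq> E"
    and deg2: "\<And>w. w \<in> V \<Longrightarrow> card {f\<in>H. w \<in> f} = 2"
    and eH: "e \<in> H" and L: "H - {e} \<subseteq> set a" and ea: "e \<notin> set a" and aE: "set a \<subseteq> E"
  shows "(\<not> (\<forall>v\<in>V. 2 \<le> degree (set a) v)) \<longleftrightarrow> (\<exists>u\<in>e. {f\<in>E - H. u \<in> f} \<inter> set a = {})"
proof -
  have fE: "finite E" using sg sg_finite by blast
  have fH: "finite H" using fE HE finite_subset by blast
  have eV: "e \<subseteq> V" using sg_edge[OF sg] eH HE by blast
  have one: "card ({f\<in>H. u \<in> f} - {e}) = 1" if "u \<in> e" for u
    using deg2[of u] that eV eH fH by (subst card_Diff_singleton) auto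
  show ?thesis
  proof
    assume "\<exists>u\<in>e. {f\<in>E - H. u \<in> f} \<inter> set a = {}"
    then obtain u where u: "u \<in> e" "{f\<in>E - H. u \<in> f} \<inter> set a = {}" by blast
    have "{f\<in>set a. u \<in> f} \<subseteq> {f\<in>H. u \<in> f} - {e}" using u aE ea by blast
    hence "degree (set a) u \<le> 1" unfolding degree_def using one[OF u(1)] fH
      by (metis (no_types, lifting) card_mono finite_Diff finite_subset mem_Collect_eq subsetI)
    thus "\<not> (\<forall>v\<in>V. 2 \<le> degree (set a) v)" using u eV by force
  next
    assume "\<not> (\<forall>v\<in>V. 2 \<le> degree (set a) v)"
    then obtain w where w: "w \<in> V" "degree (set a) w < 2" by force
    show "\<exists>u\<in>e. {f\<in>E - H. u \<in> f} \<inter> set a = {}"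
    proof (rule ccontr)
      assume nn: "\<not> (\<exists>u\<in>e. {f\<in>E - H. u \<in> f} \<inter> set a = {})"
      show False
      proof (cases "w \<in> e")
        case False
        have "{f\<in>H. w \<in> f} \<subseteq> {f\<in>set a. w \<in> f}" using False L by blast
        hence "2 \<le> degree (set a) w" unfolding degree_def using deg2[OF w(1)]
          by (metis (no_types, lifting) List.finite_set card_mono finite_subset mem_Collect_eq subsetI)
        thus False using w by simp
      next
        case True
        obtain g where g: "g \<in> E - H" "w \<in> g" "g \<in> set a" using nn True by blast
        obtain h where h: "{f\<in>H. w \<in> f} - {e} = {h}" using one[OF True] card_1_singletonE by blast
        have hh: "h \<in> H" "w \<in> h" "h \<noteq> e" using h by auto
        have "h \<in> set a" using hh L by blast
        hence "{g, h} \<subseteq> {f\<in>set a. w \<in> f}" using g hh by auto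
        moreover have "g \<noteq> h" using g hh by blast
        hence "card {g, h} = 2" by simp
        ultimately have "2 \<le> degree (set a) w" unfolding degree_def
          by (metis List.finite_set card_mono finite_filter Collect_conj_eq Collect_mem_eq finite_Int)
        thus False using w by simp
      qed
    qed
  qed
qed



lemma G_iff:
  assumes sg: "simple_graph V E" and xs: "xs \<in> permutations_of_set E" and HE: "H \<subseteq> E"
    and deg2: "\<And>w. w \<in> V \<Longrightarrow> card {f\<in>H. w \<in> f} = 2"
    and eH: "e \<in> H" and L: "H - {e} \<subseteq> set (pre e xs)"
  shows "H \<subseteq> G_omega V xs \<longleftrightarrow> \<not> (\<forall>v\<in>V. 2 \<le> degree (set (pre e xs)) v)"
proof -
  have fE: "finite E" using sg sg_finite by blast
  have dx: "distinct xs" and sx: "set xs = E" using xs by (auto simp: permutations_of_set_def)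
  have QE: "\<forall>v\<in>V. degree (set (take (length xs) xs)) v \<ge> 2"
  proof
    fix v assume v: "v \<in> V"
    have "degree H v \<le> degree E v" using deg_mono[OF fE HE] .
    moreover have "degree H v = 2" using deg2[OF v] unfolding degree_def .
    ultimately show "degree (set (take (length xs) xs)) v \<ge> 2" using sx by simp
  qed
  define k0 where "k0 = stop_index V xs"
  have Qk0: "\<forall>v\<in>V. degree (set (take k0 xs)) v \<ge> 2"
    unfolding k0_def stop_index_def by (rule LeastI[of _ "length xs"]) (rule QE)
  have le: "k0 \<le> k" if "\<forall>v\<in>V. degree (set (take k xs)) v \<ge> 2" for k
    unfolding k0_def stop_index_def using that by (rule Least_le)
  have G: "G_omega V xs = set (take k0 xs)" unfolding G_omega_def k0_def ..
  have "e \<in> set xs" using eH HE sx by blast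
  then obtain a b where ab: "xs = a @ e # b" by (meson split_list)
  have ea: "e \<notin> set a" using dx ab by simp
  have pa: "pre e xs = a" using ab ea pre_split by metis
  have ta: "take (length a) xs = a" using ab by simp
  have ta1: "take (Suc (length a)) xs = a @ [e]" using ab by simp
  show ?thesis unfolding pa
  proof
    assume HG: "H \<subseteq> G_omega V xs"
    show "\<not> (\<forall>v\<in>V. 2 \<le> degree (set a) v)"
    proof
      assume "\<forall>v\<in>V. 2 \<le> degree (set a) v"
      hence "k0 \<le> length a" using le[of "length a"] ta by simp
      hence "set (take k0 xs) \<subseteq> set a" using set_take_subset_set_take[of k0 "length a" xs] ta by simp
      thus False using HG G eH ea by blast
    qed
  next
    assume nQ: "\<not> (\<forall>v\<in>V. 2 \<le> degree (set a) v)"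
    have "\<not> k0 \<le> length a"
    proof
      assume "k0 \<le> length a"
      hence sub: "set (take k0 xs) \<subseteq> set a" using set_take_subset_set_take[of k0 "length a" xs] ta by simp
      have "\<forall>v\<in>V. 2 \<le> degree (set a) v"
      proof
        fix v assume "v \<in> V"
        hence "2 \<le> degree (set (take k0 xs)) v" using Qk0 by simp
        also have "\<dots> \<le> degree (set a) v" using deg_mono[OF _ sub] by simp
        finally show "2 \<le> degree (set a) v" .
      qed
      thus False using nQ by simp
    qed
    hence "set (a @ [e]) \<subseteq> set (take k0 xs)"
      using set_take_subset_set_take[of "Suc (length a)" k0 xs] ta1 by simp
    moreover have "H \<subseteq> set (a @ [e])" using L pa by auto
    ultimately show "H \<subseteq> G_omega V xs" using G by blast
  qed
qed

lemma final_arith: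
  assumes "n \<ge> 1" "d \<ge> 2"
  shows "real n * (2 * (fact (n - 1) * fact (d - 2) / fact (n + (d - 2)))
           - fact (n - 1) * fact (2 * (d - 2)) / fact (n + 2 * (d - 2)))
       = 2 / real ((n + d - 2) choose n) - 1 / real ((n + 2 * d - 4) choose n)"
proof -
  have fn: "real n * fact (n - 1) = (fact n :: real)" using assms fact_reduce[of n, where 'a=real] by simp
  have c1: "real ((n + d - 2) choose n) = fact (n + (d - 2)) / (fact n * fact (d - 2))"
    using assms by (subst binomial_fact) (auto simp: algebra_simps)
  have c2: "real ((n + 2 * d - 4) choose n) = fact (n + 2 * (d - 2)) / (fact n * fact (2 * (d - 2)))"
    using assms by (subst binomial_fact) (auto simp: algebra_simps)
  have "real n * (2 * (fact (n - 1) * fact (d - 2) / fact (n + (d - 2)))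
           - fact (n - 1) * fact (2 * (d - 2)) / fact (n + 2 * (d - 2)))
      = 2 * ((real n * fact (n - 1)) * fact (d - 2) / fact (n + (d - 2)))
           - (real n * fact (n - 1)) * fact (2 * (d - 2)) / fact (n + 2 * (d - 2))"
    by (simp add: algebra_simps)
  also have "\<dots> = 2 * (fact n * fact (d - 2) / fact (n + (d - 2)))
           - fact n * fact (2 * (d - 2)) / fact (n + 2 * (d - 2))" by (simp only: fn)
  also have "\<dots> = 2 / real ((n + d - 2) choose n) - 1 / real ((n + 2 * d - 4) choose n)"
    unfolding c1 c2 by simp
  finally show ?thesis .
qed



lemma count_H:
  assumes sg: "simple_graph V E" and cV: "card V = n" and n3: "n \<ge> 3"
    and reg: "regular V E d" and Hh: "H \<in> ham_cycles V E"
  shows "real (card {xs \<in> permutations_of_set E. H \<subseteq> G_omega V xs}) / fact (card E)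
       = 2 / real ((n + d - 2) choose n) - 1 / real ((n + 2 * d - 4) choose n)"
proof -
  have HE: "H \<subseteq> E" and cH: "card H = n" and deg2: "\<And>w. w \<in> V \<Longrightarrow> card {f\<in>H. w \<in> f} = 2"
    using ham_facts[OF Hh] cV by auto
  have fE: "finite E" using sg sg_finite by blast
  have fH: "finite H" using fE HE finite_subset by blast
  have degE: "\<And>w. w \<in> V \<Longrightarrow> card {f\<in>E. w \<in> f} = d" using reg unfolding regular_def degree_def by blast
  have "V \<noteq> {}" using cV n3 by auto
  then obtain w0 where w0: "w0 \<in> V" by blast
  have "card {f\<in>H. w0 \<in> f} \<le> card {f\<in>E. w0 \<in> f}" using fE HE by (intro card_mono) auto
  hence d2: "d \<ge> 2" using deg2[OF w0] degE[OF w0] by simp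
  define Nb where "Nb = (\<lambda>u. {f\<in>E - H. u \<in> f})"
  have NbE: "Nb u \<subseteq> E" for u unfolding Nb_def by blast
  have HNb: "H \<inter> Nb u = {}" for u unfolding Nb_def by blast
  have cNb: "card (Nb u) = d - 2" if u: "u \<in> V" for u
  proof -
    have "{f\<in>E. u \<in> f} = {f\<in>H. u \<in> f} \<union> Nb u" using HE unfolding Nb_def by blast
    moreover have "{f\<in>H. u \<in> f} \<inter> Nb u = {}" unfolding Nb_def by blast
    moreover have "finite (Nb u)" "finite {f\<in>H. u \<in> f}" using fE fH unfolding Nb_def by auto
    ultimately have "card {f\<in>E. u \<in> f} = card {f\<in>H. u \<in> f} + card (Nb u)"
      by (simp add: card_Un_disjoint)
    thus ?thesis using deg2[OF u] degE[OF u] by simp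
  qed
  define P where "P = permutations_of_set E"
  have fP: "finite P" unfolding P_def by simp
  define L where "L = (\<lambda>e xs. H - {e} \<subseteq> set (pre e xs))"
  define X where "X = (\<lambda>e. {xs\<in>P. L e xs \<and> (\<exists>u\<in>e. Nb u \<inter> set (pre e xs) = {})})"
  have Xeq: "{xs \<in> P. H \<subseteq> G_omega V xs} = (\<Union>e\<in>H. X e)"
  proof (rule set_eqI, rule iffI)
    fix xs assume xs: "xs \<in> {xs \<in> P. H \<subseteq> G_omega V xs}"
    have dx: "distinct xs" and sx: "set xs = E" using xs by (auto simp: P_def permutations_of_set_def)
    have "H \<noteq> {}" using cH n3 by auto
    then obtain e where eH: "e \<in> H" and Le: "H - {e} \<subseteq> set (pre e xs)"
      using exists_last[OF dx] HE sx by metis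
    have "\<not> (\<forall>v\<in>V. 2 \<le> degree (set (pre e xs)) v)"
      using G_iff[OF sg _ HE deg2 eH Le] xs unfolding P_def by blast
    hence "\<exists>u\<in>e. Nb u \<inter> set (pre e xs) = {}"
      using notQ_iff[OF sg HE deg2 eH Le pre_notin] pre_subset[of e xs] sx unfolding Nb_def by blast
    thus "xs \<in> (\<Union>e\<in>H. X e)" using xs eH Le unfolding X_def L_def by blast
  next
    fix xs assume "xs \<in> (\<Union>e\<in>H. X e)"
    then obtain e where eH: "e \<in> H" and xs: "xs \<in> P" and Le: "H - {e} \<subseteq> set (pre e xs)"
      and ex: "\<exists>u\<in>e. Nb u \<inter> set (pre e xs) = {}" unfolding X_def L_def by blast
    have sx: "set xs = E" using xs by (auto simp: P_def permutations_of_set_def)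
    have "\<not> (\<forall>v\<in>V. 2 \<le> degree (set (pre e xs)) v)"
      using notQ_iff[OF sg HE deg2 eH Le pre_notin] pre_subset[of e xs] sx ex unfolding Nb_def by blast
    hence "H \<subseteq> G_omega V xs"
      using G_iff[OF sg _ HE deg2 eH Le] xs unfolding P_def by blast
    thus "xs \<in> {xs \<in> P. H \<subseteq> G_omega V xs}" using xs by blast
  qed
  have disj: "X e \<inter> X e' = {}" if "e \<in> H" "e' \<in> H" "e \<noteq> e'" for e e'
  proof (rule ccontr)
    assume "X e \<inter> X e' \<noteq> {}"
    then obtain xs where xs: "xs \<in> P" "L e xs" "L e' xs" unfolding X_def by blast
    have dx: "distinct xs" and sx: "set xs = E" using xs by (auto simp: P_def permutations_of_set_def)
    have "e = e'" using unique_last[OF dx _ that(2,1)] xs(2,3) that HE sx unfolding L_def by blast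
    thus False using that by simp
  qed
  define \<alpha> where "\<alpha> = (fact (n - 1) * fact (d - 2) / fact (n + (d - 2)) :: real)"
  define \<beta> where "\<beta> = (fact (n - 1) * fact (2 * (d - 2)) / fact (n + 2 * (d - 2)) :: real)"
  have Xe: "real (card (X e)) / fact (card E) = 2 * \<alpha> - \<beta>" if eH: "e \<in> H" for e
  proof -
    obtain u v where uv: "u \<noteq> v" "u \<in> V" "v \<in> V" "e = {u, v}" using sg_edge[OF sg] eH HE by blast
    define Y where "Y = (\<lambda>R. {xs\<in>P. H - {e} \<subseteq> set (pre e xs) \<and> R \<inter> set (pre e xs) = {}})"
    have XY: "X e = Y (Nb u) \<union> Y (Nb v)" unfolding X_def Y_def L_def uv(4) by blast
    have YY: "Y (Nb u) \<inter> Y (Nb v) = Y (Nb u \<union> Nb v)" unfolding Y_def by blast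
    have dNb: "Nb u \<inter> Nb v = {}"
    proof (rule ccontr)
      assume "Nb u \<inter> Nb v \<noteq> {}"
      then obtain f where f: "f \<in> E" "f \<notin> H" "u \<in> f" "v \<in> f" unfolding Nb_def by blast
      obtain x y where "f = {x, y}" using sg_edge[OF sg f(1)] by blast
      hence "f = {u, v}" using f uv(1) by auto
      thus False using f uv eH by simp
    qed
    have cU: "card (Nb u \<union> Nb v) = 2 * (d - 2)"
      using card_Un_disjoint[OF _ _ dNb] fE NbE cNb uv finite_subset by (metis mult_2)
    have pr: "real (card (Y R)) / fact (card E) = fact (card H - 1) * fact (card R) / fact (card H + card R)"
      if "R \<subseteq> E" "H \<inter> R = {}" for R
      unfolding Y_def P_def using prob_event[OF fE HE that eH] .
    have fY: "finite (Y R)" for R unfolding Y_def using fP by simp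
    have "real (card (X e)) = real (card (Y (Nb u))) + real (card (Y (Nb v))) - real (card (Y (Nb u \<union> Nb v)))"
      unfolding XY YY[symmetric] using card_Un_Int[OF fY fY, of "Nb u" "Nb v"] by simp
    hence "real (card (X e)) / fact (card E) = real (card (Y (Nb u))) / fact (card E)
        + real (card (Y (Nb v))) / fact (card E) - real (card (Y (Nb u \<union> Nb v))) / fact (card E)"
      by (simp add: diff_divide_distrib add_divide_distrib)
    also have "\<dots> = \<alpha> + \<alpha> - \<beta>"
      unfolding \<alpha>_def \<beta>_def
      using pr[OF NbE HNb, of u] pr[OF NbE HNb, of v] pr[of "Nb u \<union> Nb v"] NbE HNb cU cNb uv cH
      by auto
    finally show ?thesis by simp
  qed
  have fX: "finite (X e)" for e unfolding X_def using fP by simp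
  have "card {xs \<in> P. H \<subseteq> G_omega V xs} = (\<Sum>e\<in>H. card (X e))"
    unfolding Xeq by (rule card_UN_disjoint[OF fH]) (use fX disj in auto)
  hence "real (card {xs \<in> P. H \<subseteq> G_omega V xs}) / fact (card E) = (\<Sum>e\<in>H. real (card (X e)) / fact (card E))"
    by (simp add: sum_divide_distrib)
  also have "\<dots> = (\<Sum>e\<in>H. 2 * \<alpha> - \<beta>)" using Xe by simp
  also have "\<dots> = real n * (2 * \<alpha> - \<beta>)" using cH by simp
  also have "\<dots> = 2 / real ((n + d - 2) choose n) - 1 / real ((n + 2 * d - 4) choose n)"
    unfolding \<alpha>_def \<beta>_def using final_arith[of n d] n3 d2 by simp
  finally show ?thesis unfolding P_def .
qed



theorem corollary3:
  fixes V :: "'a set" and E :: "'a set set" and n d :: nat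
  assumes "simple_graph V E"
    and "card V = n" and "n \<ge> 3"
    and "regular V E d"
    and "ham_cycles V E \<noteq> {}"
  shows "measure_pmf.expectation (pmf_of_set (permutations_of_set E))
           (\<lambda>xs. real (card {H \<in> ham_cycles V E. H \<subseteq> G_omega V xs}) / real (card (ham_cycles V E)))
         = 2 / real ((n + d - 2) choose n) - 1 / real ((n + 2 * d - 4) choose n)"
proof -
  define P where "P = permutations_of_set E"
  define HC where "HC = ham_cycles V E"
  define r where "r = 2 / real ((n + d - 2) choose n) - 1 / real ((n + 2 * d - 4) choose n)"
  have fE: "finite E" using assms(1) sg_finite by blast
  have fP: "finite P" and neP: "P \<noteq> {}" using fE unfolding P_def by auto
  have cP: "real (card P) = fact (card E)" using fE unfolding P_def by simp
  have fHC: "finite HC"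
  proof -
    have "HC \<subseteq> Pow E" unfolding HC_def ham_cycles_def by blast
    moreover have "finite (Pow E)" using fE by simp
    ultimately show ?thesis by (rule finite_subset)
  qed
  have "HC \<noteq> {}" using assms(5) unfolding HC_def .
  hence cHC: "card HC > 0" using fHC by (simp add: card_gt_0_iff)
  have each: "real (card {xs \<in> P. H \<subseteq> G_omega V xs}) = r * real (card P)" if "H \<in> HC" for H
    using count_H[OF assms(1-4), of H] that cP unfolding HC_def P_def r_def
    by (simp add: field_simps)
  have cnt: "real (card {H \<in> HC. H \<subseteq> G_omega V xs}) = (\<Sum>H\<in>HC. if H \<subseteq> G_omega V xs then 1 else 0)" for xs
    using fHC by (simp add: sum.If_cases Int_def)
  have cnt2: "real (card {xs \<in> P. H \<subseteq> G_omega V xs}) = (\<Sum>xs\<in>P. if H \<subseteq> G_omega V xs then 1 else 0)" for H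
    using fP by (simp add: sum.If_cases Int_def)
  have "measure_pmf.expectation (pmf_of_set P)
           (\<lambda>xs. real (card {H \<in> HC. H \<subseteq> G_omega V xs}) / real (card HC))
      = (\<Sum>xs\<in>P. real (card {H \<in> HC. H \<subseteq> G_omega V xs}) / real (card HC)) / real (card P)"
    by (rule integral_pmf_of_set) (use fP neP in auto)
  also have "(\<Sum>xs\<in>P. real (card {H \<in> HC. H \<subseteq> G_omega V xs}) / real (card HC))
      = (\<Sum>xs\<in>P. \<Sum>H\<in>HC. if H \<subseteq> G_omega V xs then 1 else 0) / real (card HC)"
    unfolding cnt by (simp add: sum_divide_distrib)
  also have "(\<Sum>xs\<in>P. \<Sum>H\<in>HC. if H \<subseteq> G_omega V xs then 1 else (0::real))
      = (\<Sum>H\<in>HC. \<Sum>xs\<in>P. if H \<subseteq> G_omega V xs then 1 else 0)" by (rule sum.swap)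
  also have "\<dots> = (\<Sum>H\<in>HC. r * real (card P))"
    using each cnt2 by simp
  also have "\<dots> = real (card HC) * r * real (card P)" by simp
  finally show ?thesis
    using cHC neP fP unfolding P_def[symmetric] HC_def[symmetric] r_def[symmetric]
    by (simp add: field_simps)
qed

end
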